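(* Let $S(A)$ be a regular Stanley sequence with character $\lambda(A)$. Then $\lambda(A)\ge 0$, and $\lambda(A)\ne 1$, $\lambda(A)\ne 3$.
   Context: A set of non-negative integers is 3-free if no three of its elements form an arithmetic progression. For a finite 3-free set $A=\{a_0<\cdots<a_k\}$ of non-negative integers, the Stanley sequence $S(A)=(a_n)_{n\ge0}$ is the increasing sequence with initial terms $a_0,\ldots,a_k$ in which each subsequent $a_{n+1}$ is the smallest integer greater than $a_n$ such that $\{a_0,\ldots,a_{n+1}\}$ is 3-free. Throughout, Stanley sequences are in root position ($a_0=0$). A Stanley sequence $(a_n)$ is independent with character $\lambda$ if for all sufficiently large $k$: $a_{2^k+i}=a_{2^k}+a_i$ for $0\le i<2^k$, and $a_{2^k}=2a_{2^k-1}-\lambda+1$. A Stanley sequence $(a_n)$ is regular with character $\lambda$ if there exist a constant $\sigma$ and an independent Stanley sequence $(a'_n)$ of character $\lambda$ such that for all large $k$ and $0\le i<2^k$: $a_{2^k-\sigma+i}=a_{2^k-\sigma}+a'_i$ and $a_{2^k-\sigma}=2a_{2^k-\sigma-1}-\lambda+1$ (these data are unique). *)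

theory Defs
  imports Main
begin

definition three_free :: "nat set \<Rightarrow> bool" where
  "three_free S \<longleftrightarrow> (\<forall>x\<in>S. \<forall>y\<in>S. \<forall>z\<in>S. x < y \<longrightarrow> y < z \<longrightarrow> x + z \<noteq> 2 * y)"

text \<open>Admissible initial sets: finite, 3-free, and in root position (containing 0, hence a_0 = 0).\<close>
definition stanley_init :: "nat set \<Rightarrow> bool" where
  "stanley_init A \<longleftrightarrow> finite A \<and> three_free A \<and> 0 \<in> A"

fun stanley_list :: "nat set \<Rightarrow> nat \<Rightarrow> nat list" where
  "stanley_list A 0 = []"
| "stanley_list A (Suc n) =
     (let xs = stanley_list A n in
      if n < card A then xs @ [sorted_list_of_set A ! n]
      else xs @ [LEAST m. last xs < m \<and> three_free (insert m (set xs))])"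

definition stanley :: "nat set \<Rightarrow> nat \<Rightarrow> nat" where
  "stanley A n = stanley_list A (Suc n) ! n"

definition is_stanley_seq :: "(nat \<Rightarrow> nat) \<Rightarrow> bool" where
  "is_stanley_seq a \<longleftrightarrow> (\<exists>A. stanley_init A \<and> a = stanley A)"

definition independent :: "(nat \<Rightarrow> nat) \<Rightarrow> int \<Rightarrow> bool" where
  "independent a lam \<longleftrightarrow> (\<exists>K. \<forall>k\<ge>K.
      (\<forall>i<2^k. a (2^k + i) = a (2^k) + a i) \<and>
      int (a (2^k)) = 2 * int (a (2^k - 1)) - lam + 1)"

text \<open>Regular with character lam (sigma an integer constant; indices 2^k - sigma are
  natural numbers for all large k).\<close>
definition regular :: "(nat \<Rightarrow> nat) \<Rightarrow> int \<Rightarrow> bool" where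
  "regular a lam \<longleftrightarrow> (\<exists>(\<sigma>::int) a'. is_stanley_seq a' \<and> independent a' lam \<and>
     (\<exists>K. \<forall>k\<ge>K. 2^k - \<sigma> \<ge> 1 \<and>
        (\<forall>i<2^k. a (nat (2^k - \<sigma>) + i) = a (nat (2^k - \<sigma>)) + a' i) \<and>
        int (a (nat (2^k - \<sigma>))) = 2 * int (a (nat (2^k - \<sigma> - 1))) - lam + 1))"

end

theory Submission
  imports Defs
begin

lemma sl_len: "length (stanley_list A n) = n"
  by (induction n) (simp_all add: Let_def)

lemma sl_snoc: "\<exists>x. stanley_list A (Suc n) = stanley_list A n @ [x]"
  by (simp add: Let_def)

lemma sl_eq: "stanley_list A n = map (stanley A) [0..<n]"
proof (induction n)
  case 0 then show ?case by simp
next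
  case (Suc n)
  obtain x where x: "stanley_list A (Suc n) = stanley_list A n @ [x]" using sl_snoc by blast
  have "stanley A n = x" unfolding stanley_def x by (simp add: nth_append sl_len)
  then show ?case using x Suc.IH by simp
qed

lemma st_rec: assumes "0 < n \<or> n < card A"
  shows "stanley A n = (if n < card A then sorted_list_of_set A ! n else
     LEAST m. stanley A (n - 1) < m \<and> three_free (insert m (stanley A ` {..<n})))"
proof -
  have "stanley A n = stanley_list A (Suc n) ! n" by (simp add: stanley_def)
  also have "\<dots> = (if n < card A then sorted_list_of_set A ! n else
     LEAST m. last (map (stanley A) [0..<n]) < m \<and> three_free (insert m (set (map (stanley A) [0..<n]))))"
    by (simp only: stanley_list.simps Let_def sl_eq[of A n]) (simp add: nth_append)
  moreover have "set (map (stanley A) [0..<n]) = stanley A ` {..<n}" by auto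
  moreover have "n \<ge> card A \<Longrightarrow> last (map (stanley A) [0..<n]) = stanley A (n - 1)"
    using assms by (simp add: last_map)
  ultimately show ?thesis by (cases "n < card A") auto
qed

lemma tf_insert: assumes "three_free S" "\<forall>x\<in>S. 2*x < m" shows "three_free (insert m S)"
  unfolding three_free_def
proof (intro ballI impI)
  fix x y z assume h: "x \<in> insert m S" "y \<in> insert m S" "z \<in> insert m S" "x < y" "y < z"
  show "x + z \<noteq> 2 * y"
  proof (cases "z = m")
    case True
    have "y \<in> S" using h True by auto
    then show ?thesis using assms(2) True by fastforce
  next
    case False
    then have "z \<in> S" using h by auto
    then have "z < m" using assms(2) by fastforce
    then have "x \<in> S" "y \<in> S" using h by auto
    then show ?thesis using assms(1) h \<open>z \<in> S\<close> unfolding three_free_def by blast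
  qed
qed

lemma tf_sub: "three_free S \<Longrightarrow> T \<subseteq> S \<Longrightarrow> three_free T"
  unfolding three_free_def by blast

lemma card_pos: "stanley_init A \<Longrightarrow> 0 < card A"
  unfolding stanley_init_def using card_gt_0_iff by blast

lemma st_in_A: assumes "stanley_init A" "n < card A" shows "stanley A n \<in> A"
proof -
  have "stanley A n = sorted_list_of_set A ! n" using st_rec[of n A] assms by simp
  moreover have "finite A" using assms unfolding stanley_init_def by simp
  ultimately show ?thesis using assms(2) by (metis length_sorted_list_of_set nth_mem set_sorted_list_of_set)
qed

lemma img_Suc: "f ` {..<Suc n} = insert (f n) (f ` {..<n})"
  by (simp add: lessThan_Suc)

lemma st_greedy_aux: assumes "three_free (stanley A ` {..<n})" "card A \<le> n" "0 < n"
  shows "stanley A (n-1) < stanley A n \<and> three_free (insert (stanley A n) (stanley A ` {..<n}))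
    \<and> (\<forall>m. stanley A (n-1) < m \<and> m < stanley A n \<longrightarrow> \<not> three_free (insert m (stanley A ` {..<n})))
    \<and> (\<forall>m. stanley A (n-1) < m \<and> three_free (insert m (stanley A ` {..<n})) \<longrightarrow> stanley A n \<le> m)"
proof -
  define S where "S = stanley A ` {..<n}"
  define P where "P = (\<lambda>m. stanley A (n - 1) < m \<and> three_free (insert m S))"
  have eq: "stanley A n = (LEAST m. P m)" using st_rec[of n A] assms unfolding P_def S_def by simp
  define m0 where "m0 = 2 * Max (insert 0 S) + stanley A (n-1) + 1"
  have fin: "finite S" unfolding S_def by simp
  have "\<forall>x\<in>S. 2*x < m0"
  proof
    fix x assume "x \<in> S"
    then have "x \<le> Max (insert 0 S)" using fin by simp
    then show "2*x < m0" unfolding m0_def by linarith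
  qed
  then have "P m0" unfolding P_def m0_def using tf_insert assms(1) S_def by auto
  then have "P (stanley A n)" unfolding eq by (rule LeastI)
  moreover have "\<forall>m. m < stanley A n \<longrightarrow> \<not> P m" unfolding eq using not_less_Least by blast
  moreover have "\<forall>m. P m \<longrightarrow> stanley A n \<le> m" unfolding eq using Least_le by blast
  ultimately show ?thesis unfolding P_def S_def by blast
qed

lemma st_tf: assumes "stanley_init A" shows "three_free (stanley A ` {..<n})"
proof (induction n)
  case 0 then show ?case by (simp add: three_free_def)
next
  case (Suc n)
  show ?case
  proof (cases "n < card A")
    case True
    have "stanley A ` {..<Suc n} \<subseteq> A" using st_in_A[OF assms] True by auto
    then show ?thesis using tf_sub assms unfolding stanley_init_def by blast
  next
    case False
    then have "0 < n" using card_pos[OF assms] by simp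
    then show ?thesis using st_greedy_aux[of A n] Suc.IH False img_Suc[of "stanley A" n] by simp
  qed
qed

lemma st_greedy: assumes "stanley_init A" "card A \<le> n"
  shows "stanley A (n-1) < stanley A n
    \<and> (\<forall>m. stanley A (n-1) < m \<and> m < stanley A n \<longrightarrow> \<not> three_free (insert m (stanley A ` {..<n})))
    \<and> (\<forall>m. stanley A (n-1) < m \<and> three_free (insert m (stanley A ` {..<n})) \<longrightarrow> stanley A n \<le> m)"
  using st_greedy_aux[of A n] st_tf[OF assms(1)] assms card_pos[OF assms(1)] by simp

lemma st_Suc: assumes "stanley_init A" shows "stanley A n < stanley A (Suc n)"
proof (cases "Suc n < card A")
  case True
  then have "stanley A n = sorted_list_of_set A ! n" "stanley A (Suc n) = sorted_list_of_set A ! Suc n"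
    using st_rec[of n A] st_rec[of "Suc n" A] by auto
  moreover have "sorted_wrt (<) (sorted_list_of_set A)" by (rule strict_sorted_list_of_set)
  moreover have "Suc n < length (sorted_list_of_set A)" using True assms
    unfolding stanley_init_def by simp
  ultimately show ?thesis using sorted_wrt_nth_less by fastforce
next
  case False
  then show ?thesis using st_greedy[OF assms, of "Suc n"] by simp
qed

lemma st_smono: assumes "stanley_init A" shows "strict_mono (stanley A)"
  using st_Suc[OF assms] by (simp add: strict_mono_Suc_iff)

lemma st_0: assumes "stanley_init A" shows "stanley A 0 = 0"
proof -
  have cp: "0 < card A" using card_pos[OF assms] .
  have fin: "finite A" "0 \<in> A" using assms unfolding stanley_init_def by auto
  then obtain j where j: "j < card A" "sorted_list_of_set A ! j = 0"
    by (metis in_set_conv_nth length_sorted_list_of_set set_sorted_list_of_set)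
  have "stanley A j = 0" using j st_rec[of j A] by simp
  moreover have "stanley A 0 \<le> stanley A j" using st_smono[OF assms] by (simp add: strict_mono_less_eq)
  ultimately show ?thesis by simp
qed

lemma st_ge: assumes "stanley_init A" shows "n \<le> stanley A n"
  using st_smono[OF assms] by (simp add: strict_mono_imp_increasing)

lemma indep_char: assumes B: "stanley_init B" and ind: "independent (stanley B) lam"
  shows "lam \<ge> 0 \<and> lam \<noteq> 1 \<and> lam \<noteq> 3"
proof -
  define a where "a = stanley B"
  obtain K where hK: "\<forall>k\<ge>K. (\<forall>i<2^k. a (2^k + i) = a (2^k) + a i) \<and>
      int (a (2^k)) = 2 * int (a (2^k - 1)) - lam + 1" using ind unfolding independent_def a_def by blast
  define k where "k = K + card B + 3"
  define n where "n = (2::nat)^k"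
  have "k < n" unfolding n_def by simp
  then have nb: "card B + 4 \<le> n" "K \<le> k" unfolding k_def by auto
  define M where "M = a (n - 1)"
  have hind: "\<forall>i<n. a (n + i) = a n + a i" and heq: "int (a n) = 2 * int M - lam + 1"
    using hK nb(2) unfolding n_def M_def by auto
  have sm: "strict_mono a" unfolding a_def using st_smono[OF B] .
  have a0: "a 0 = 0" unfolding a_def using st_0[OF B] .
  have M4: "M \<ge> 4" unfolding M_def a_def using st_ge[OF B, of "n-1"] nb card_pos[OF B] by linarith
  have lowM: "\<And>j. j < n \<Longrightarrow> a j \<le> M" unfolding M_def using sm by (simp add: strict_mono_less_eq)
  have gr: "a (n-1) < a n
    \<and> (\<forall>m. a (n-1) < m \<and> m < a n \<longrightarrow> \<not> three_free (insert m (a ` {..<n})))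
    \<and> (\<forall>m. a (n-1) < m \<and> three_free (insert m (a ` {..<n})) \<longrightarrow> a n \<le> m)"
    unfolding a_def using st_greedy[OF B, of n] nb by simp
  have tfn: "three_free (a ` {..<n})" unfolding a_def using st_tf[OF B] .
  have "three_free (insert (2*M+1) (a ` {..<n}))"
  proof (rule tf_insert[OF tfn])
    show "\<forall>x\<in>a ` {..<n}. 2 * x < 2 * M + 1" using lowM by fastforce
  qed
  then have "a n \<le> 2*M+1" using gr M_def by auto
  then have l0: "lam \<ge> 0" using heq by linarith
  have l1: "lam \<noteq> 1"
  proof
    assume "lam = 1"
    then have an: "a n = 2*M" using heq by linarith
    have "three_free (a ` {..<Suc n})" unfolding a_def using st_tf[OF B] .
    moreover have "0 \<in> a ` {..<Suc n}" "M \<in> a ` {..<Suc n}" "2*M \<in> a ` {..<Suc n}"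
      using rev_image_eqI[of 0 "{..<Suc n}" 0 a] rev_image_eqI[of "n-1" "{..<Suc n}" M a]
        rev_image_eqI[of n "{..<Suc n}" "2*M" a] a0 an M_def by auto
    ultimately have "0 < M \<longrightarrow> M < 2*M \<longrightarrow> 0 + 2*M \<noteq> 2*M" unfolding three_free_def by blast
    then show False using M4 by simp
  qed
  have l3: "lam \<noteq> 3"
  proof
    assume "lam = 3"
    then have an: "a n = 2*M - 2" using heq M4 by linarith
    have an1: "a (n+1) = a n + a 1" using hind[rule_format, of 1] nb by simp
    have a1: "a 1 > 0" using sm a0 by (metis strict_mono_less zero_less_one)
    show False
    proof (cases "a 1 = 1")
      case True
      have "three_free (a ` {..<Suc (Suc n)})" unfolding a_def using st_tf[OF B] .
      moreover have "1 \<in> a ` {..<Suc (Suc n)}"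
        by (rule rev_image_eqI[of 1]) (use True in auto)
      moreover have "M \<in> a ` {..<Suc (Suc n)}"
        by (rule rev_image_eqI[of "n-1"]) (use M_def in auto)
      moreover have "2*M - 1 \<in> a ` {..<Suc (Suc n)}"
        by (rule rev_image_eqI[of "n+1"]) (use True an an1 M4 in auto)
      ultimately have "1 < M \<longrightarrow> M < 2*M-1 \<longrightarrow> 1 + (2*M-1) \<noteq> 2*M" unfolding three_free_def by blast
      then show False using M4 by simp
    next
      case False
      then have a12: "a 1 \<ge> 2" using a1 by linarith
      define T where "T = a ` {..<Suc n}"
      have gr2: "\<forall>m. a n < m \<and> m < a (Suc n) \<longrightarrow> \<not> three_free (insert m T)"
        unfolding a_def T_def using st_greedy[OF B, of "Suc n"] nb by simp
      have "2*M-2 < 2*M-1 \<and> 2*M-1 < 2*M-2 + a 1" using a12 M4 by linarith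
      then have "\<not> three_free (insert (2*M-1) T)" using gr2[rule_format, of "2*M-1"] an an1 by simp
      then obtain x y z where xyz: "x \<in> insert (2*M-1) T" "y \<in> insert (2*M-1) T" "z \<in> insert (2*M-1) T"
        "x < y" "y < z" "x + z = 2*y" unfolding three_free_def by blast
      have tfT: "three_free T" unfolding a_def T_def using st_tf[OF B] .
      have Tprop: "\<forall>w\<in>T. (w \<le> M \<and> w \<noteq> 1) \<or> w = 2*M-2"
      proof
        fix w assume "w \<in> T"
        then obtain j where j: "j < Suc n" "w = a j" unfolding T_def by auto
        show "(w \<le> M \<and> w \<noteq> 1) \<or> w = 2*M-2"
        proof (cases "j = n")
          case True then show ?thesis using j an by simp
        next
          case False
          then have "w \<le> M" using j lowM by simp
          moreover have "w \<noteq> 1"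
          proof (cases j)
            case 0 then show ?thesis using j a0 by simp
          next
            case (Suc j') then have "a 1 \<le> a j" using sm by (simp add: strict_mono_less_eq)
            then show ?thesis using j a12 by simp
          qed
          ultimately show ?thesis by simp
        qed
      qed
      have zT: "z = 2*M-1"
      proof (rule ccontr)
        assume "z \<noteq> 2*M-1"
        then have "z \<in> T" using xyz by simp
        then have "z < 2*M-1" using Tprop M4 by fastforce
        then have "x \<in> T" "y \<in> T" using xyz by auto
        then show False using tfT xyz \<open>z \<in> T\<close> unfolding three_free_def by blast
      qed
      then have "x \<in> T" "y \<in> T" using xyz by auto
      then have "(x \<le> M \<and> x \<noteq> 1) \<or> x = 2*M-2" "(y \<le> M \<and> y \<noteq> 1) \<or> y = 2*M-2"
        using Tprop by auto
      then show False
      proof (elim disjE conjE)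
        assume "x \<le> M" "x \<noteq> 1" "y \<le> M"
        then have "x = 0" using xyz(6) zT M4 by linarith
        then have "2*y = 2*M - 1" using xyz(6) zT by simp
        then show False using M4 by presburger
      qed (use xyz(4,5,6) zT M4 in linarith)+
    qed
  qed
  show ?thesis using l0 l1 l3 by simp
qed

theorem mainTheorem10:
  fixes A :: "nat set" and lam :: int
  assumes "stanley_init A"
    and "regular (stanley A) lam"
  shows "lam \<ge> 0 \<and> lam \<noteq> 1 \<and> lam \<noteq> 3"
proof -
  obtain a' where "is_stanley_seq a'" "independent a' lam" using assms(2) unfolding regular_def by blast
  then obtain B where "stanley_init B" "a' = stanley B" unfolding is_stanley_seq_def by blast
  then show ?thesis using indep_char \<open>independent a' lam\<close> by blast
qed

end
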